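(* Let $\Omega\subset\mathbb{R}^d$ be a compact set with positive volume whose boundary has Lebesgue measure zero; let $\omega:\Omega\to[0,\infty)$ be Riemann integrable with nowhere dense zero set; let $\mathcal{F}_K(\Omega)$ be a $K$-dimensional space of continuous real functions on $\Omega$ containing the constants, such that $I[f]=\int_\Omega\omega f\,\mathrm{d}\boldsymbol{x}$ is positive definite on $\mathcal{F}_K(\Omega)$. Let $(\mathbf{x}_n)_{n\in\mathbb{N}}\subset\Omega$ be equidistributed in $\Omega$ (i.e. $\lim_{N\to\infty}\frac{|\Omega|}{N}\sum_{n=1}^Ng(\mathbf{x}_n)=\int_\Omega g$ for every bounded measurable $g$ continuous almost everywhere). Then there exist $N\in\mathbb{N}$, $M\le K$, points $\mathbf{y}_1,\dots,\mathbf{y}_M\in\{\mathbf{x}_1,\dots,\mathbf{x}_N\}\subset\Omega$ and weights $\lambda_1,\dots,\lambda_M>0$ such that $\sum_{j=1}^M\lambda_jf(\mathbf{y}_j)=I[f]$ for all $f\in\mathcal{F}_K(\Omega)$. *)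

theory Defs
  imports "HOL-Analysis.Analysis"
begin

text \<open>Riemann integrability of f over a bounded set S, by the literal definition:
  the zero extension of f to a box containing S has convergent Riemann sums
  (tagged divisions fine w.r.t. a constant gauge of radius delta).\<close>
definition riemann_integrable_on :: "('a::euclidean_space \<Rightarrow> real) \<Rightarrow> 'a set \<Rightarrow> bool" where
  "riemann_integrable_on f S \<longleftrightarrow>
     (\<exists>a b I. S \<subseteq> cbox a b \<and>
        (\<forall>e>0. \<exists>\<delta>>0. \<forall>D. D tagged_division_of cbox a b \<and> (\<lambda>x. ball x \<delta>) fine D \<longrightarrow>
            \<bar>(\<Sum>(x,K)\<in>D. Henstock_Kurzweil_Integration.content K * (if x \<in> S then f x else 0)) - I\<bar> < e))"

text \<open>Functions on \<Omega>
  are represented by functions on the whole space, identified when they agree on \<Omega>;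
  F is the set of all functions agreeing on \<Omega> with a linear combination of K functions
  that are continuous on \<Omega> and linearly independent as functions on \<Omega>.\<close>
definition fun_space_on :: "'a::topological_space set \<Rightarrow> nat \<Rightarrow> ('a \<Rightarrow> real) set \<Rightarrow> bool" where
  "fun_space_on \<Omega> K F \<longleftrightarrow>
     (\<exists>\<phi>::nat \<Rightarrow> 'a \<Rightarrow> real.
        (\<forall>i<K. continuous_on \<Omega> (\<phi> i)) \<and>
        (\<forall>c. (\<forall>x\<in>\<Omega>. (\<Sum>i<K. c i * \<phi> i x) = 0) \<longrightarrow> (\<forall>i<K. c i = 0)) \<and>
        F = {f. \<exists>c. \<forall>x\<in>\<Omega>. f x = (\<Sum>i<K. c i * \<phi> i x)})"

definition equidistributed_in :: "(nat \<Rightarrow> 'a::euclidean_space) \<Rightarrow> 'a set \<Rightarrow> bool" where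
  "equidistributed_in x \<Omega> \<longleftrightarrow>
     (\<forall>n. x n \<in> \<Omega>) \<and>
     (\<forall>g::'a \<Rightarrow> real. bounded (g ` \<Omega>) \<and> g \<in> borel_measurable (lebesgue_on \<Omega>) \<and>
        (AE t in lebesgue. t \<in> \<Omega> \<longrightarrow> continuous (at t within \<Omega>) g) \<longrightarrow>
        (\<lambda>N. measure lebesgue \<Omega> / real N * (\<Sum>n=1..N. g (x n))) \<longlonglongrightarrow> integral \<Omega> g)"

end

theory Submission
  imports Defs "HOL-Analysis.Analysis"
begin

lemma ip_lin_left:
  "(\<Sum>i\<in>I. (u i - k * v i) * c i) = (\<Sum>i\<in>I. u i * c i) - k * (\<Sum>i\<in>I. v i * (c i::real))"
  by (simp add: algebra_simps sum_subtractf sum_distrib_left)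

lemma ip_lin_right:
  "(\<Sum>i\<in>I. u i * (c i - k * d i)) = (\<Sum>i\<in>I. u i * c i) - k * (\<Sum>i\<in>I. u i * (d i::real))"
  by (simp add: algebra_simps sum_subtractf sum_distrib_left)

lemma farkas_aux:
  fixes S :: "'t set" and I :: "'i set"
  assumes "finite S" "finite I"
  shows "\<forall>(a::'t \<Rightarrow> 'i \<Rightarrow> real) (b::'i \<Rightarrow> real).
    (\<exists>l. (\<forall>t\<in>S. l t \<ge> 0) \<and> (\<forall>i\<in>I. b i = (\<Sum>t\<in>S. l t * a t i))) \<or>
    (\<exists>y. (\<forall>t\<in>S. (\<Sum>i\<in>I. y i * a t i) \<ge> 0) \<and> (\<Sum>i\<in>I. y i * b i) < 0)"
  using assms(1)
proof (induction S rule: finite_induct)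
  case empty
  show ?case
  proof (intro allI)
    fix a :: "'t \<Rightarrow> 'i \<Rightarrow> real" and b :: "'i \<Rightarrow> real"
    show "(\<exists>l. (\<forall>t\<in>{}. l t \<ge> 0) \<and> (\<forall>i\<in>I. b i = (\<Sum>t\<in>{}. l t * a t i))) \<or>
    (\<exists>y. (\<forall>t\<in>{}. (\<Sum>i\<in>I. y i * a t i) \<ge> 0) \<and> (\<Sum>i\<in>I. y i * b i) < 0)"
    proof (cases "\<forall>i\<in>I. b i = 0")
      case True then show ?thesis by auto
    next
      case False
      then obtain i0 where i0: "i0 \<in> I" "b i0 \<noteq> 0" by auto
      have "(\<Sum>i\<in>I. b i * b i) > 0"
        by (rule sum_pos2[OF assms(2) i0(1)]) (use i0 in \<open>auto simp: zero_less_mult_iff linorder_neq_iff\<close>)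
      then have "(\<Sum>i\<in>I. (- b i) * b i) < 0" by (simp add: sum_negf)
      then show ?thesis by (intro disjI2 exI[of _ "\<lambda>i. - b i"]) simp
    qed
  qed
next
  case (insert s S)
  show ?case
  proof (intro allI)
    fix a :: "'t \<Rightarrow> 'i \<Rightarrow> real" and b :: "'i \<Rightarrow> real"
    let ?C = "\<exists>l. (\<forall>t\<in>insert s S. l t \<ge> 0) \<and> (\<forall>i\<in>I. b i = (\<Sum>t\<in>insert s S. l t * a t i))"
    let ?D = "\<exists>y. (\<forall>t\<in>insert s S. (\<Sum>i\<in>I. y i * a t i) \<ge> 0) \<and> (\<Sum>i\<in>I. y i * b i) < 0"
    from insert.IH[rule_format, where a=a and b=b]
    consider (cone) l where "\<forall>t\<in>S. l t \<ge> 0" "\<forall>i\<in>I. b i = (\<Sum>t\<in>S. l t * a t i)"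
      | (sep) y where "\<forall>t\<in>S. (\<Sum>i\<in>I. y i * a t i) \<ge> 0" "(\<Sum>i\<in>I. y i * b i) < 0"
      by blast
    then show "?C \<or> ?D"
    proof cases
      case cone
      have "\<forall>i\<in>I. b i = (\<Sum>t\<in>insert s S. (l(s:=0)) t * a t i)"
      proof
        fix i assume "i \<in> I"
        have "(\<Sum>t\<in>insert s S. (l(s:=0)) t * a t i) = (\<Sum>t\<in>S. (l(s:=0)) t * a t i)"
          using insert.hyps by (simp add: sum.insert)
        also have "\<dots> = (\<Sum>t\<in>S. l t * a t i)"
          using insert.hyps by (intro sum.cong) auto
        finally show "b i = (\<Sum>t\<in>insert s S. (l(s:=0)) t * a t i)" using cone \<open>i\<in>I\<close> by simp
      qed
      moreover have "\<forall>t\<in>insert s S. (l(s:=0)) t \<ge> 0" using cone by auto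
      ultimately show ?thesis by blast
    next
      case sep
      show ?thesis
      proof (cases "(\<Sum>i\<in>I. y i * a s i) \<ge> 0")
        case True
        then show ?thesis using sep by auto
      next
        case False
        define p where "p = (\<Sum>i\<in>I. y i * a s i)"
        have p: "p < 0" using False p_def by simp
        define Y where "Y t = (\<Sum>j\<in>I. y j * a t j)" for t
        define B where "B = (\<Sum>j\<in>I. y j * b j)"
        define a' where "a' t i = a t i - Y t / p * a s i" for t i
        define b' where "b' i = b i - B / p * a s i" for i
        from insert.IH[rule_format, where a=a' and b=b']
        consider (cone2) \<mu> where "\<forall>t\<in>S. \<mu> t \<ge> 0" "\<forall>i\<in>I. b' i = (\<Sum>t\<in>S. \<mu> t * a' t i)"
          | (sep2) z where "\<forall>t\<in>S. (\<Sum>i\<in>I. z i * a' t i) \<ge> 0" "(\<Sum>i\<in>I. z i * b' i) < 0"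
          by blast
        then show ?thesis
        proof cases
          case cone2
          define l where "l = \<mu>(s := (B - (\<Sum>t\<in>S. \<mu> t * Y t)) / p)"
          have "(\<Sum>t\<in>S. \<mu> t * Y t) \<ge> 0"
            using cone2(1) sep(1) unfolding Y_def by (intro sum_nonneg) auto
          moreover have "B < 0" using sep(2) B_def by simp
          ultimately have ls: "l s > 0" unfolding l_def using p
            by (simp add: zero_less_divide_iff)
          have "\<forall>i\<in>I. b i = (\<Sum>t\<in>insert s S. l t * a t i)"
          proof
            fix i assume i: "i \<in> I"
            have e1: "(\<Sum>t\<in>insert s S. l t * a t i) = l s * a s i + (\<Sum>t\<in>S. \<mu> t * a t i)"
              using insert.hyps by (simp add: sum.insert l_def) (intro sum.cong, auto)
            have "b' i = (\<Sum>t\<in>S. \<mu> t * a t i) - (\<Sum>t\<in>S. \<mu> t * Y t) / p * a s i"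
              using cone2(2) i unfolding a'_def
              by (simp add: algebra_simps sum_subtractf sum_distrib_left sum_distrib_right sum_divide_distrib)
            then have "b i = (\<Sum>t\<in>S. \<mu> t * a t i) - (\<Sum>t\<in>S. \<mu> t * Y t) / p * a s i + B / p * a s i"
              unfolding b'_def by simp
            also have "\<dots> = l s * a s i + (\<Sum>t\<in>S. \<mu> t * a t i)"
              unfolding l_def using p by (simp add: field_simps)
            finally show "b i = (\<Sum>t\<in>insert s S. l t * a t i)" using e1 by simp
          qed
          moreover have "\<forall>t\<in>insert s S. l t \<ge> 0"
            using cone2(1) ls insert.hyps unfolding l_def by auto
          ultimately show ?thesis by blast
        next
          case sep2
          define Z where "Z = (\<Sum>k\<in>I. z k * a s k)"
          define w where "w j = z j - Z / p * y j" for j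
          have wa: "(\<Sum>i\<in>I. w i * a t i) = (\<Sum>i\<in>I. z i * a' t i)" for t
            unfolding w_def a'_def ip_lin_left ip_lin_right Y_def Z_def by simp
          have was: "(\<Sum>i\<in>I. w i * a s i) = 0"
            unfolding w_def ip_lin_left Z_def using p by (simp add: p_def[symmetric])
          have wb: "(\<Sum>i\<in>I. w i * b i) = (\<Sum>i\<in>I. z i * b' i)"
            unfolding w_def b'_def ip_lin_left ip_lin_right B_def Z_def by simp
          have "\<forall>t\<in>insert s S. (\<Sum>i\<in>I. w i * a t i) \<ge> 0"
            using sep2(1) wa was by auto
          moreover have "(\<Sum>i\<in>I. w i * b i) < 0" using wb sep2(2) by simp
          ultimately show ?thesis by blast
        qed
      qed
    qed
  qed
qed

lemma dep_aux:
  fixes I :: "'i set"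
  assumes "finite I"
  shows "\<forall>(S::'t set) (a::'t \<Rightarrow> 'i \<Rightarrow> real). finite S \<and> card S > card I \<longrightarrow>
     (\<exists>\<mu>. (\<exists>t\<in>S. \<mu> t \<noteq> 0) \<and> (\<forall>i\<in>I. (\<Sum>t\<in>S. \<mu> t * a t i) = 0))"
  using assms
proof (induction I rule: finite_induct)
  case empty
  show ?case
  proof (intro allI impI)
    fix S :: "'t set" and a :: "'t \<Rightarrow> 'i \<Rightarrow> real"
    assume "finite S \<and> card S > card ({}::'i set)"
    then obtain t0 where "t0 \<in> S" by fastforce
    then show "\<exists>\<mu>. (\<exists>t\<in>S. \<mu> t \<noteq> 0) \<and> (\<forall>i\<in>{}. (\<Sum>t\<in>S. \<mu> t * a t i) = 0)"
      by (intro exI[of _ "\<lambda>_. 1"]) auto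
  qed
next
  case (insert i I)
  show ?case
  proof (intro allI impI)
    fix S :: "'t set" and a :: "'t \<Rightarrow> 'i \<Rightarrow> real"
    assume SA: "finite S \<and> card S > card (insert i I)"
    then have fS: "finite S" and cS: "card S > Suc (card I)" using insert.hyps by auto
    show "\<exists>\<mu>. (\<exists>t\<in>S. \<mu> t \<noteq> 0) \<and> (\<forall>k\<in>insert i I. (\<Sum>t\<in>S. \<mu> t * a t k) = 0)"
    proof (cases "\<forall>t\<in>S. a t i = 0")
      case True
      from insert.IH[rule_format, where S=S and a=a] fS cS
      obtain \<mu> where "\<exists>t\<in>S. \<mu> t \<noteq> 0" "\<forall>k\<in>I. (\<Sum>t\<in>S. \<mu> t * a t k) = 0" by auto
      then show ?thesis using True by (intro exI[of _ \<mu>]) auto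
    next
      case False
      then obtain t0 where t0: "t0 \<in> S" "a t0 i \<noteq> 0" by auto
      define S' where "S' = S - {t0}"
      have fS': "finite S'" and cS': "card S' > card I" using fS cS t0 unfolding S'_def by auto
      define a' where "a' t k = a t k - a t i / a t0 i * a t0 k" for t k
      from insert.IH[rule_format, where S=S' and a=a'] fS' cS'
      obtain \<mu>' where mu1: "\<exists>t\<in>S'. \<mu>' t \<noteq> 0" and mu2: "\<forall>k\<in>I. (\<Sum>t\<in>S'. \<mu>' t * a' t k) = 0" by auto
      define \<mu> where "\<mu> = \<mu>'(t0 := - (\<Sum>t\<in>S'. \<mu>' t * a t i) / a t0 i)"
      have split: "(\<Sum>t\<in>S. \<mu> t * a t k) = \<mu> t0 * a t0 k + (\<Sum>t\<in>S'. \<mu>' t * a t k)" for k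
      proof -
        have "(\<Sum>t\<in>S. \<mu> t * a t k) = \<mu> t0 * a t0 k + (\<Sum>t\<in>S'. \<mu> t * a t k)"
          unfolding S'_def using fS t0 by (simp add: sum.remove)
        also have "(\<Sum>t\<in>S'. \<mu> t * a t k) = (\<Sum>t\<in>S'. \<mu>' t * a t k)"
          unfolding \<mu>_def S'_def by (intro sum.cong) auto
        finally show ?thesis .
      qed
      have "\<exists>t\<in>S. \<mu> t \<noteq> 0" using mu1 unfolding \<mu>_def S'_def by auto
      moreover have "\<forall>k\<in>insert i I. (\<Sum>t\<in>S. \<mu> t * a t k) = 0"
      proof
        fix k assume k: "k \<in> insert i I"
        show "(\<Sum>t\<in>S. \<mu> t * a t k) = 0"
        proof (cases "k = i")
          case True
          then show ?thesis unfolding split using t0 by (simp add: \<mu>_def)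
        next
          case False
          then have kI: "k \<in> I" using k by auto
          have "(\<Sum>t\<in>S'. \<mu>' t * a' t k) = (\<Sum>t\<in>S'. \<mu>' t * a t k) - (\<Sum>t\<in>S'. \<mu>' t * a t i) / a t0 i * a t0 k"
            unfolding a'_def by (simp add: algebra_simps sum_subtractf sum_distrib_left sum_distrib_right sum_divide_distrib)
          then have "(\<Sum>t\<in>S'. \<mu>' t * a t k) = (\<Sum>t\<in>S'. \<mu>' t * a t i) / a t0 i * a t0 k"
            using mu2 kI by simp
          then show ?thesis unfolding split by (simp add: \<mu>_def)
        qed
      qed
      ultimately show ?thesis by blast
    qed
  qed
qed

lemma carath_aux:
  fixes I :: "'i set" and a :: "'t \<Rightarrow> 'i \<Rightarrow> real"
  assumes "finite I"
  shows "\<forall>S l. finite S \<and> card S = n \<and> (\<forall>t\<in>S. l t > 0) \<and> (\<forall>i\<in>I. b i = (\<Sum>t\<in>S. l t * a t i)) \<longrightarrow>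
     (\<exists>S' l'. S' \<subseteq> S \<and> card S' \<le> card I \<and> (\<forall>t\<in>S'. l' t > 0) \<and> (\<forall>i\<in>I. b i = (\<Sum>t\<in>S'. l' t * a t i)))"
proof (induction n rule: less_induct)
  case (less n)
  show ?case
  proof (intro allI impI)
    fix S l assume H: "finite S \<and> card S = n \<and> (\<forall>t\<in>S. l t > 0) \<and> (\<forall>i\<in>I. b i = (\<Sum>t\<in>S. l t * a t i))"
    then have fS: "finite S" and cS: "card S = n" and lpos: "\<forall>t\<in>S. l t > 0"
      and rep: "\<forall>i\<in>I. b i = (\<Sum>t\<in>S. l t * a t i)" by auto
    show "\<exists>S' l'. S' \<subseteq> S \<and> card S' \<le> card I \<and> (\<forall>t\<in>S'. l' t > 0) \<and> (\<forall>i\<in>I. b i = (\<Sum>t\<in>S'. l' t * a t i))"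
    proof (cases "card S \<le> card I")
      case True
      then show ?thesis using lpos rep by blast
    next
      case False
      from dep_aux[OF assms, rule_format, where S=S and a=a] fS False
      obtain \<mu> where mu1: "\<exists>t\<in>S. \<mu> t \<noteq> 0" and mu2: "\<forall>i\<in>I. (\<Sum>t\<in>S. \<mu> t * a t i) = 0" by auto
      define \<nu> where "\<nu> = (if \<exists>t\<in>S. \<mu> t > 0 then \<mu> else (\<lambda>t. - \<mu> t))"
      have nu1: "\<exists>t\<in>S. \<nu> t > 0"
      proof (cases "\<exists>t\<in>S. \<mu> t > 0")
        case True then show ?thesis unfolding \<nu>_def by simp
      next
        case False then show ?thesis using mu1 unfolding \<nu>_def by (auto simp: not_less) (meson less_eq_real_def neg_0_less_iff_less)
      qed
      have nu2: "\<forall>i\<in>I. (\<Sum>t\<in>S. \<nu> t * a t i) = 0"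
        using mu2 unfolding \<nu>_def by (auto simp: sum_negf)
      define P where "P = {t\<in>S. \<nu> t > 0}"
      have fP: "finite P" and neP: "P \<noteq> {}" using fS nu1 unfolding P_def by auto
      define \<theta> where "\<theta> = Min ((\<lambda>t. l t / \<nu> t) ` P)"
      have "\<theta> \<in> (\<lambda>t. l t / \<nu> t) ` P"
        using Min_in[of "(\<lambda>t. l t / \<nu> t) ` P"] fP neP unfolding \<theta>_def by blast
      then obtain t0 where t0P: "t0 \<in> P" and th: "\<theta> = l t0 / \<nu> t0" by blast
      have thle: "\<theta> \<le> l t / \<nu> t" if "t \<in> P" for t
        unfolding \<theta>_def using fP that by (intro Min_le) auto
      have thpos: "\<theta> > 0" using th t0P lpos unfolding P_def by auto
      define l2 where "l2 t = l t - \<theta> * \<nu> t" for t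
      have l2nn: "l2 t \<ge> 0" if "t \<in> S" for t
      proof (cases "\<nu> t > 0")
        case True
        then have "\<theta> \<le> l t / \<nu> t" using thle that unfolding P_def by auto
        then have "\<theta> * \<nu> t \<le> l t" using True by (simp add: pos_le_divide_eq)
        then show ?thesis unfolding l2_def by simp
      next
        case False
        then have "\<theta> * \<nu> t \<le> 0" using thpos by (simp add: mult_nonneg_nonpos)
        then show ?thesis unfolding l2_def using lpos that by (smt (verit))
      qed
      have l2t0: "l2 t0 = 0" unfolding l2_def th using t0P unfolding P_def by auto
      define S2 where "S2 = {t\<in>S. l2 t > 0}"
      have S2sub: "S2 \<subseteq> S" unfolding S2_def by auto
      have "S2 \<subseteq> S - {t0}" using l2t0 unfolding S2_def by auto
      moreover have "t0 \<in> S" using t0P unfolding P_def by auto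
      ultimately have cS2: "card S2 < n" using fS cS
        by (metis card_Diff1_less card_mono finite_Diff le_less_trans)
      have rep2: "\<forall>i\<in>I. b i = (\<Sum>t\<in>S2. l2 t * a t i)"
      proof
        fix i assume i: "i \<in> I"
        have "(\<Sum>t\<in>S2. l2 t * a t i) = (\<Sum>t\<in>S. l2 t * a t i)"
          using fS S2sub l2nn unfolding S2_def
          by (intro sum.mono_neutral_left) (auto simp: not_less, metis less_eq_real_def)
        also have "\<dots> = (\<Sum>t\<in>S. l t * a t i) - \<theta> * (\<Sum>t\<in>S. \<nu> t * a t i)"
          unfolding l2_def by (simp add: algebra_simps sum_subtractf sum_distrib_left)
        also have "\<dots> = b i" using rep nu2 i by simp
        finally show "b i = (\<Sum>t\<in>S2. l2 t * a t i)" by simp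
      qed
      have "finite S2" using fS S2sub finite_subset by blast
      with less.IH[OF cS2, rule_format, where S=S2 and l=l2] rep2
      obtain S' l' where "S' \<subseteq> S2" "card S' \<le> card I" "\<forall>t\<in>S'. l' t > 0" "\<forall>i\<in>I. b i = (\<Sum>t\<in>S'. l' t * a t i)"
        unfolding S2_def by auto
      then show ?thesis using S2sub by blast
    qed
  qed
qed

lemma bolzano_fin:
  fixes I :: "'i set" and z :: "nat \<Rightarrow> 'i \<Rightarrow> real"
  assumes "finite I" "\<forall>n. \<forall>i\<in>I. \<bar>z n i\<bar> \<le> B"
  shows "\<exists>r. strict_mono r \<and> (\<forall>i\<in>I. \<exists>l. (\<lambda>n. z (r n) i) \<longlonglongrightarrow> l)"
  using assms
proof (induction I rule: finite_induct)
  case empty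
  show ?case by (intro exI[of _ id]) (auto simp: strict_mono_def)
next
  case (insert i I)
  then obtain r1 where r1: "strict_mono r1" "\<forall>j\<in>I. \<exists>l. (\<lambda>n. z (r1 n) j) \<longlonglongrightarrow> l" by auto
  have "bounded (range (\<lambda>n. z (r1 n) i))"
    using insert.prems unfolding bounded_iff by (intro exI[of _ B]) auto
  from bounded_imp_convergent_subsequence[OF this]
  obtain l r2 where r2: "strict_mono r2" "((\<lambda>n. z (r1 n) i) \<circ> r2) \<longlonglongrightarrow> l" by blast
  have "strict_mono (r1 \<circ> r2)" using r1(1) r2(1) by (simp add: strict_mono_o)
  moreover have "\<forall>j\<in>insert i I. \<exists>l. (\<lambda>n. z ((r1 \<circ> r2) n) j) \<longlonglongrightarrow> l"
  proof
    fix j assume "j \<in> insert i I"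
    then show "\<exists>l. (\<lambda>n. z ((r1 \<circ> r2) n) j) \<longlonglongrightarrow> l"
    proof
      assume "j = i" then show ?thesis using r2(2) by (auto simp: o_def)
    next
      assume "j \<in> I"
      then obtain lj where "(\<lambda>n. z (r1 n) j) \<longlonglongrightarrow> lj" using r1 by auto
      from LIMSEQ_subseq_LIMSEQ[OF this r2(1)] show ?thesis by (auto simp: o_def)
    qed
  qed
  ultimately show ?case by blast
qed

lemma sum_upd0:
  assumes "finite I" "i0 \<in> I"
  shows "(\<Sum>i\<in>I. (c(i0:=0)) i * g i) = (\<Sum>i\<in>I-{i0}. c i * (g i::real))"
proof -
  have "(\<Sum>i\<in>I. (c(i0:=0)) i * g i) = (c(i0:=0)) i0 * g i0 + (\<Sum>i\<in>I-{i0}. (c(i0:=0)) i * g i)"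
    using assms by (simp add: sum.remove)
  also have "\<dots> = (\<Sum>i\<in>I-{i0}. c i * g i)" by (auto intro!: sum.cong)
  finally show ?thesis .
qed

lemma core:
  fixes U :: "'a set" and Xs :: "nat \<Rightarrow> 'a set" and \<phi> :: "nat \<Rightarrow> 'a \<Rightarrow> real" and m :: "nat \<Rightarrow> real"
  assumes fin: "\<forall>N. finite (Xs N)" and sub: "\<forall>N. Xs N \<subseteq> U" and mon: "\<forall>N N'. N \<le> N' \<longrightarrow> Xs N \<subseteq> Xs N'"
    and "finite I"
  shows "(\<forall>c. (\<forall>N. \<forall>t\<in>Xs N. (\<Sum>i\<in>I. c i * \<phi> i t) \<ge> 0) \<and> (\<Sum>i\<in>I. c i * m i) \<le> 0 \<longrightarrow> (\<forall>t\<in>U. (\<Sum>i\<in>I. c i * \<phi> i t) = 0)) \<longrightarrow>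
   (\<forall>c. (\<forall>t\<in>U. (\<Sum>i\<in>I. c i * \<phi> i t) = 0) \<longrightarrow> (\<Sum>i\<in>I. c i * m i) = 0) \<longrightarrow>
   (\<exists>N l. (\<forall>t\<in>Xs N. l t \<ge> 0) \<and> (\<forall>i\<in>I. m i = (\<Sum>t\<in>Xs N. l t * \<phi> i t)))"
  using \<open>finite I\<close>
proof (induction I rule: finite_psubset_induct)
  case (psubset I)
  show ?case
  proof (intro impI)
    assume P: "\<forall>c. (\<forall>N. \<forall>t\<in>Xs N. (\<Sum>i\<in>I. c i * \<phi> i t) \<ge> 0) \<and> (\<Sum>i\<in>I. c i * m i) \<le> 0 \<longrightarrow> (\<forall>t\<in>U. (\<Sum>i\<in>I. c i * \<phi> i t) = 0)"
    assume Q: "\<forall>c. (\<forall>t\<in>U. (\<Sum>i\<in>I. c i * \<phi> i t) = 0) \<longrightarrow> (\<Sum>i\<in>I. c i * m i) = 0"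
    show "\<exists>N l. (\<forall>t\<in>Xs N. l t \<ge> 0) \<and> (\<forall>i\<in>I. m i = (\<Sum>t\<in>Xs N. l t * \<phi> i t))"
    proof (cases "\<exists>c i0. i0 \<in> I \<and> c i0 \<noteq> 0 \<and> (\<forall>t\<in>U. (\<Sum>i\<in>I. c i * \<phi> i t) = 0)")
      case True
      then obtain c i0 where i0: "i0 \<in> I" "c i0 \<noteq> 0" and dep: "\<forall>t\<in>U. (\<Sum>i\<in>I. c i * \<phi> i t) = 0" by blast
      define I' where "I' = I - {i0}"
      have psub: "I' \<subset> I" using i0 unfolding I'_def by auto
      have P': "\<forall>c'. (\<forall>N. \<forall>t\<in>Xs N. (\<Sum>i\<in>I'. c' i * \<phi> i t) \<ge> 0) \<and> (\<Sum>i\<in>I'. c' i * m i) \<le> 0 \<longrightarrow> (\<forall>t\<in>U. (\<Sum>i\<in>I'. c' i * \<phi> i t) = 0)"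
      proof (intro allI impI)
        fix c' assume "(\<forall>N. \<forall>t\<in>Xs N. (\<Sum>i\<in>I'. c' i * \<phi> i t) \<ge> 0) \<and> (\<Sum>i\<in>I'. c' i * m i) \<le> 0"
        then show "\<forall>t\<in>U. (\<Sum>i\<in>I'. c' i * \<phi> i t) = 0"
          using P[rule_format, where c="c'(i0:=0)"] unfolding sum_upd0[OF psubset.hyps i0(1)] I'_def by blast
      qed
      have Q': "\<forall>c'. (\<forall>t\<in>U. (\<Sum>i\<in>I'. c' i * \<phi> i t) = 0) \<longrightarrow> (\<Sum>i\<in>I'. c' i * m i) = 0"
      proof (intro allI impI)
        fix c' assume "\<forall>t\<in>U. (\<Sum>i\<in>I'. c' i * \<phi> i t) = 0"
        then show "(\<Sum>i\<in>I'. c' i * m i) = 0"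
          using Q[rule_format, where c="c'(i0:=0)"] unfolding sum_upd0[OF psubset.hyps i0(1)] I'_def by blast
      qed
      from psubset.IH[OF psub] P' Q'
      obtain N l where lnn: "\<forall>t\<in>Xs N. l t \<ge> 0" and rep: "\<forall>i\<in>I'. m i = (\<Sum>t\<in>Xs N. l t * \<phi> i t)" by blast
      have split: "(\<Sum>i\<in>I. c i * g i) = c i0 * g i0 + (\<Sum>i\<in>I'. c i * g i)" for g :: "nat \<Rightarrow> real"
        unfolding I'_def using psubset.hyps i0 by (simp add: sum.remove)
      have Qc: "c i0 * m i0 = - (\<Sum>i\<in>I'. c i * m i)"
      proof -
        have "(\<Sum>i\<in>I. c i * m i) = 0" using Q dep by blast
        then show ?thesis using split[of m] by simp
      qed
      have dept: "c i0 * \<phi> i0 t = - (\<Sum>i\<in>I'. c i * \<phi> i t)" if "t \<in> U" for t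
        using dep that split[of "\<lambda>i. \<phi> i t"] by simp
      have "c i0 * (\<Sum>t\<in>Xs N. l t * \<phi> i0 t) = (\<Sum>t\<in>Xs N. l t * (c i0 * \<phi> i0 t))"
        by (simp add: sum_distrib_left algebra_simps)
      also have "\<dots> = (\<Sum>t\<in>Xs N. l t * (- (\<Sum>i\<in>I'. c i * \<phi> i t)))"
      proof (intro sum.cong refl)
        fix t assume "t \<in> Xs N"
        then have "t \<in> U" using sub by blast
        then show "l t * (c i0 * \<phi> i0 t) = l t * (- (\<Sum>i\<in>I'. c i * \<phi> i t))" using dept by simp
      qed
      also have "\<dots> = - (\<Sum>i\<in>I'. c i * (\<Sum>t\<in>Xs N. l t * \<phi> i t))"
        by (simp add: sum_distrib_left sum_negf algebra_simps sum.swap[of _ "Xs N"])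
      also have "\<dots> = - (\<Sum>i\<in>I'. c i * m i)" using rep by simp
      also have "\<dots> = c i0 * m i0" using Qc by simp
      finally have "m i0 = (\<Sum>t\<in>Xs N. l t * \<phi> i0 t)" using i0(2) by simp
      then have "\<forall>i\<in>I. m i = (\<Sum>t\<in>Xs N. l t * \<phi> i t)" using rep unfolding I'_def by blast
      then show ?thesis using lnn by blast
    next
      case False
      then have indep: "\<forall>c. (\<forall>t\<in>U. (\<Sum>i\<in>I. c i * \<phi> i t) = 0) \<longrightarrow> (\<forall>i\<in>I. c i = 0)" by blast
      show ?thesis
      proof (rule ccontr)
        assume nc: "\<not> (\<exists>N l. (\<forall>t\<in>Xs N. l t \<ge> 0) \<and> (\<forall>i\<in>I. m i = (\<Sum>t\<in>Xs N. l t * \<phi> i t)))"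
        have "\<forall>N. \<exists>y. (\<forall>t\<in>Xs N. (\<Sum>i\<in>I. y i * \<phi> i t) \<ge> 0) \<and> (\<Sum>i\<in>I. y i * m i) < 0"
        proof
          fix N
          from farkas_aux[OF fin[rule_format, of N] psubset.hyps, rule_format, where a="\<lambda>t i. \<phi> i t" and b=m] nc
          show "\<exists>y. (\<forall>t\<in>Xs N. (\<Sum>i\<in>I. y i * \<phi> i t) \<ge> 0) \<and> (\<Sum>i\<in>I. y i * m i) < 0" by blast
        qed
        then obtain y where y1: "\<And>N. \<forall>t\<in>Xs N. (\<Sum>i\<in>I. y N i * \<phi> i t) \<ge> 0"
          and y2: "\<And>N. (\<Sum>i\<in>I. y N i * m i) < 0" by metis
        define nr where "nr N = sqrt (\<Sum>i\<in>I. (y N i)\<^sup>2)" for N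
        have nrpos: "nr N > 0" for N
        proof -
          have "\<exists>i\<in>I. y N i \<noteq> 0"
          proof (rule ccontr)
            assume "\<not> (\<exists>i\<in>I. y N i \<noteq> 0)"
            then have "(\<Sum>i\<in>I. y N i * m i) = 0" by simp
            then show False using y2[of N] by simp
          qed
          then obtain i where "i \<in> I" "y N i \<noteq> 0" by blast
          then have "(\<Sum>i\<in>I. (y N i)\<^sup>2) > 0"
            by (intro sum_pos2[OF psubset.hyps, of i]) auto
          then show ?thesis unfolding nr_def by simp
        qed
        define z where "z N i = y N i / nr N" for N i
        have zb: "\<forall>n. \<forall>i\<in>I. \<bar>z n i\<bar> \<le> 1"
        proof (intro allI ballI)
          fix n i assume i: "i \<in> I"
          have "(y n i)\<^sup>2 \<le> (\<Sum>i\<in>I. (y n i)\<^sup>2)"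
            using i psubset.hyps by (intro member_le_sum) auto
          then have "sqrt ((y n i)\<^sup>2) \<le> nr n" unfolding nr_def by (rule real_sqrt_le_mono)
          then have "\<bar>y n i\<bar> \<le> nr n" by simp
          moreover have "\<bar>z n i\<bar> = \<bar>y n i\<bar> / nr n" unfolding z_def using nrpos[of n] by (simp add: abs_divide)
          ultimately show "\<bar>z n i\<bar> \<le> 1" using nrpos[of n] by (simp add: divide_le_eq_1_pos)
        qed
        have zsq: "(\<Sum>i\<in>I. (z n i)\<^sup>2) = 1" for n
        proof -
          have "(\<Sum>i\<in>I. (z n i)\<^sup>2) = (\<Sum>i\<in>I. (y n i)\<^sup>2) / (nr n)\<^sup>2"
            unfolding z_def by (simp add: power_divide sum_divide_distrib)
          also have "(nr n)\<^sup>2 = (\<Sum>i\<in>I. (y n i)\<^sup>2)" unfolding nr_def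
            by (rule real_sqrt_pow2) (rule sum_nonneg, simp)
          finally have eq: "(\<Sum>i\<in>I. (z n i)\<^sup>2) = (\<Sum>i\<in>I. (y n i)\<^sup>2) / (\<Sum>i\<in>I. (y n i)\<^sup>2)" .
          have "(\<Sum>i\<in>I. (y n i)\<^sup>2) \<noteq> 0" using nrpos[of n] unfolding nr_def by auto
          then show ?thesis using eq by simp
        qed
        have z1: "\<forall>t\<in>Xs N. (\<Sum>i\<in>I. z N i * \<phi> i t) \<ge> 0" for N
        proof
          fix t assume "t \<in> Xs N"
          then have "(\<Sum>i\<in>I. y N i * \<phi> i t) / nr N \<ge> 0" using y1[of N] nrpos[of N] by simp
          then show "(\<Sum>i\<in>I. z N i * \<phi> i t) \<ge> 0" unfolding z_def by (simp add: sum_divide_distrib)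
        qed
        have z2: "(\<Sum>i\<in>I. z N i * m i) < 0" for N
        proof -
          have "(\<Sum>i\<in>I. y N i * m i) / nr N < 0" using y2[of N] nrpos[of N] by (simp add: divide_neg_pos)
          then show ?thesis unfolding z_def by (simp add: sum_divide_distrib)
        qed
        from bolzano_fin[OF psubset.hyps zb]
        obtain r where r: "strict_mono r" and conv: "\<forall>i\<in>I. \<exists>l. (\<lambda>n. z (r n) i) \<longlonglongrightarrow> l" by blast
        from bchoice[OF conv] obtain zl where zl: "\<forall>i\<in>I. (\<lambda>n. z (r n) i) \<longlonglongrightarrow> zl i" by blast
        have lim_ip: "(\<lambda>n. (\<Sum>i\<in>I. z (r n) i * g i)) \<longlonglongrightarrow> (\<Sum>i\<in>I. zl i * g i)" for g :: "nat \<Rightarrow> real"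
          using zl by (intro tendsto_sum tendsto_mult_right) auto
        have A: "\<forall>N. \<forall>t\<in>Xs N. (\<Sum>i\<in>I. zl i * \<phi> i t) \<ge> 0"
        proof (intro allI ballI)
          fix N t assume t: "t \<in> Xs N"
          have "\<forall>n\<ge>N. 0 \<le> (\<Sum>i\<in>I. z (r n) i * \<phi> i t)"
          proof (intro allI impI)
            fix n assume "n \<ge> N"
            then have "r n \<ge> N" using seq_suble[OF r, of n] by simp
            then have "t \<in> Xs (r n)" using mon t by blast
            then show "0 \<le> (\<Sum>i\<in>I. z (r n) i * \<phi> i t)" using z1 by blast
          qed
          then have ev: "\<exists>N0. \<forall>n\<ge>N0. 0 \<le> (\<Sum>i\<in>I. z (r n) i * \<phi> i t)" by (rule exI)
          show "(\<Sum>i\<in>I. zl i * \<phi> i t) \<ge> 0"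
            by (rule LIMSEQ_le_const[OF lim_ip ev])
        qed
        have ev2: "\<exists>N0. \<forall>n\<ge>N0. (\<Sum>i\<in>I. z (r n) i * m i) \<le> 0"
          using z2 less_imp_le by blast
        have B: "(\<Sum>i\<in>I. zl i * m i) \<le> 0"
          by (rule LIMSEQ_le_const2[OF lim_ip[of m] ev2])
        have C: "(\<Sum>i\<in>I. (zl i)\<^sup>2) = 1"
        proof -
          have "(\<lambda>n. (\<Sum>i\<in>I. (z (r n) i)\<^sup>2)) \<longlonglongrightarrow> (\<Sum>i\<in>I. (zl i)\<^sup>2)"
            using zl by (intro tendsto_sum tendsto_power) auto
          then show ?thesis using zsq by (simp add: LIMSEQ_const_iff)
        qed
        have "\<forall>t\<in>U. (\<Sum>i\<in>I. zl i * \<phi> i t) = 0"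
          using mp[OF spec[OF P, of zl]] A B by blast
        then have "\<forall>i\<in>I. zl i = 0" using mp[OF spec[OF indep, of zl]] by blast
        then have "(\<Sum>i\<in>I. (zl i)\<^sup>2) = 0" by simp
        then show False using C by simp
      qed
    qed
  qed
qed

lemma integral_pos_ball:
  fixes g :: "'a::euclidean_space \<Rightarrow> real"
  assumes ai: "g absolutely_integrable_on S" and nn: "\<forall>s\<in>S. g s \<ge> 0"
    and sub: "ball a r \<subseteq> S" and r: "r > 0" and pos: "\<forall>s\<in>ball a r. g s > 0"
  shows "integral S g > 0"
proof -
  have Bs: "ball a r \<in> sets lebesgue" by (simp add: fmeasurableD lmeasurable_ball)
  have aiB: "g absolutely_integrable_on ball a r" using set_integrable_subset[OF ai Bs sub] by simp
  have iS: "g integrable_on S" using set_lebesgue_integral_eq_integral(1)[OF ai] .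
  have iB: "g integrable_on ball a r" using set_lebesgue_integral_eq_integral(1)[OF aiB] .
  have le: "integral (ball a r) g \<le> integral S g"
    by (rule integral_subset_le[OF sub iB iS nn])
  have nn2: "integral (ball a r) g \<ge> 0"
    using pos less_imp_le by (intro integral_nonneg[OF iB]) blast
  have "integral (ball a r) g \<noteq> 0"
  proof
    assume z: "integral (ball a r) g = 0"
    have int: "integrable lebesgue (\<lambda>x. indicator (ball a r) x * g x)"
      using aiB by (simp add: set_integrable_def)
    have "(LINT x:ball a r | lebesgue. indicator (ball a r) x * g x) = (LINT x:ball a r | lebesgue. g x)"
      unfolding set_lebesgue_integral_def by (intro Bochner_Integration.integral_cong) (auto simp: indicator_def)
    also have "\<dots> = integral (ball a r) g" using set_lebesgue_integral_eq_integral(2)[OF aiB] .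
    finally have z2: "(LINT x:ball a r | lebesgue. indicator (ball a r) x * g x) = 0" using z by simp
    have "AE x\<in>ball a r in lebesgue. indicator (ball a r) x * g x > 0"
      using pos by (intro AE_I2) auto
    from null_if_pos_func_has_zero_int[OF int Bs this z2]
    have "negligible (ball a r)" by (simp add: negligible_iff_null_sets)
    moreover have "ball a r \<noteq> {}" using r by simp
    ultimately show False using open_not_negligible[of "ball a r"] by simp
  qed
  then show ?thesis using le nn2 by simp
qed

lemma nbhd_neg:
  fixes f :: "'a::euclidean_space \<Rightarrow> real"
  assumes "isCont f t" "f t < 0" "open U" "t \<in> U"
  shows "\<exists>r>0. ball t r \<subseteq> U \<and> (\<forall>s\<in>ball t r. f s < 0)"
proof -
  from assms(1) have "f \<midarrow>t\<rightarrow> f t" by (simp add: isCont_def)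
  then obtain d where d: "d > 0" "\<forall>s. s \<noteq> t \<and> norm (s - t) < d \<longrightarrow> norm (f s - f t) < - f t"
    using assms(2) unfolding LIM_eq by (metis neg_0_less_iff_less)
  obtain e where e: "e > 0" "ball t e \<subseteq> U" using assms(3,4) openE by blast
  define r where "r = min d e"
  have "r > 0" using d e r_def by simp
  moreover have "ball t r \<subseteq> U" using e r_def by auto
  moreover have "\<forall>s\<in>ball t r. f s < 0"
  proof
    fix s assume s: "s \<in> ball t r"
    show "f s < 0"
    proof (cases "s = t")
      case True then show ?thesis using assms(2) by simp
    next
      case False
      have "norm (s - t) < d" using s r_def by (simp add: dist_norm norm_minus_commute)
      then have "norm (f s - f t) < - f t" using d False by blast
      then show ?thesis by simp
    qed
  qed
  ultimately show ?thesis by blast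
qed

theorem mainTheorem8:
  fixes \<Omega> :: "'a::euclidean_space set"
    and \<omega> :: "'a \<Rightarrow> real"
    and F :: "('a \<Rightarrow> real) set"
    and K :: nat
    and x :: "nat \<Rightarrow> 'a"
  assumes "compact \<Omega>"
    and "measure lebesgue \<Omega> > 0"
    and "frontier \<Omega> \<in> null_sets lebesgue"
    and "\<forall>t\<in>\<Omega>. \<omega> t \<ge> 0"
    and "riemann_integrable_on \<omega> \<Omega>"
    and "interior (closure {t\<in>\<Omega>. \<omega> t = 0}) = {}"
    and "fun_space_on \<Omega> K F"
    and "\<forall>c::real. (\<lambda>t. c) \<in> F"
    and "\<forall>f\<in>F. (\<forall>t\<in>\<Omega>. f t \<ge> 0) \<and> (\<exists>t\<in>\<Omega>. f t \<noteq> 0)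
               \<longrightarrow> integral \<Omega> (\<lambda>t. \<omega> t * f t) > 0"
    and "equidistributed_in x \<Omega>"
  shows "\<exists>(N::nat) (M::nat) (y::nat \<Rightarrow> 'a) (lam::nat \<Rightarrow> real).
           M \<le> K \<and> (\<forall>j<M. y j \<in> x ` {1..N}) \<and> (\<forall>j<M. lam j > 0) \<and>
           (\<forall>f\<in>F. (\<Sum>j<M. lam j * f (y j)) = integral \<Omega> (\<lambda>t. \<omega> t * f t))"
proof -
  note cpt = assms(1) and mpos = assms(2) and fr = assms(3) and wnn = assms(4)
    and nwd = assms(6) and const = assms(8) and posdef = assms(9)
  from assms(7) obtain \<phi> :: "nat \<Rightarrow> 'a \<Rightarrow> real" where
    phic: "\<forall>i<K. continuous_on \<Omega> (\<phi> i)" and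
    Fdef: "F = {f. \<exists>c. \<forall>x\<in>\<Omega>. f x = (\<Sum>i<K. c i * \<phi> i x)}"
    unfolding fun_space_on_def by blast
  from assms(10) have xin: "\<forall>n. x n \<in> \<Omega>" and
    equi: "\<And>g. bounded (g ` \<Omega>) \<Longrightarrow> g \<in> borel_measurable (lebesgue_on \<Omega>) \<Longrightarrow>
        (AE t in lebesgue. t \<in> \<Omega> \<longrightarrow> continuous (at t within \<Omega>) g) \<Longrightarrow>
        (\<lambda>N. measure lebesgue \<Omega> / real N * (\<Sum>n=1..N. g (x n))) \<longlonglongrightarrow> integral \<Omega> g"
    unfolding equidistributed_in_def by auto
  have Olm: "\<Omega> \<in> lmeasurable" using cpt by (rule lmeasurable_compact)
  have Oleb: "\<Omega> \<in> sets lebesgue" using Olm by (rule fmeasurableD)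
  have One: "\<Omega> \<noteq> {}" using mpos by auto
  define U where "U = interior \<Omega>"
  have Uopen: "open U" unfolding U_def by simp
  have UO: "U \<subseteq> \<Omega>" unfolding U_def by (rule interior_subset)
  have Uleb: "U \<in> sets lebesgue"
    using Uopen UO compact_imp_bounded[OF cpt] bounded_subset
    by (metis fmeasurableD lmeasurable_open)
  have negOU: "negligible (\<Omega> - U)"
  proof -
    have "\<Omega> - U \<subseteq> frontier \<Omega>" unfolding U_def frontier_def using closure_subset by blast
    moreover have "negligible (frontier \<Omega>)" using fr by (simp add: negligible_iff_null_sets)
    ultimately show ?thesis using negligible_subset by blast
  qed
  have "(\<lambda>t. 1::real) \<in> F" using const by blast
  then have "integral \<Omega> (\<lambda>t. \<omega> t * 1) > 0" using posdef One by fastforce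
  then have wint: "\<omega> integrable_on \<Omega>" using not_integrable_integral by fastforce
  have wai: "\<omega> absolutely_integrable_on \<Omega>"
    using nonnegative_absolutely_integrable_1[OF wint] wnn by blast
  define E where "E c t = (\<Sum>i<K. c i * \<phi> i t)" for c t
  have Ecn: "continuous_on \<Omega> (E c)" for c
    unfolding E_def using phic by (intro continuous_intros) auto
  have hai: "(\<lambda>t. \<omega> t * E c t) absolutely_integrable_on \<Omega>" for c
  proof -
    have "bounded (E c ` \<Omega>)" using compact_continuous_image[OF Ecn cpt] compact_imp_bounded by blast
    moreover have "E c \<in> borel_measurable (lebesgue_on \<Omega>)"
      by (rule continuous_imp_measurable_on_sets_lebesgue[OF Ecn Oleb])
    ultimately have "(\<lambda>t. E c t * \<omega> t) absolutely_integrable_on \<Omega>"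
      using absolutely_integrable_bounded_measurable_product[OF bilinear_times _ Oleb _ wai] by blast
    then show ?thesis by (simp add: mult.commute)
  qed
  have pai: "(\<lambda>t. \<omega> t * \<phi> i t) absolutely_integrable_on \<Omega>" if "i < K" for i
  proof -
    have "bounded (\<phi> i ` \<Omega>)" using compact_continuous_image[OF _ cpt] compact_imp_bounded phic that by blast
    moreover have "\<phi> i \<in> borel_measurable (lebesgue_on \<Omega>)"
      using continuous_imp_measurable_on_sets_lebesgue[OF _ Oleb] phic that by blast
    ultimately have "(\<lambda>t. \<phi> i t * \<omega> t) absolutely_integrable_on \<Omega>"
      using absolutely_integrable_bounded_measurable_product[OF bilinear_times _ Oleb _ wai] by blast
    then show ?thesis by (simp add: mult.commute)
  qed
  define m where "m i = integral \<Omega> (\<lambda>t. \<omega> t * \<phi> i t)" for i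
  have lin: "(\<Sum>i<K. c i * m i) = integral \<Omega> (\<lambda>t. \<omega> t * E c t)" for c
  proof -
    have "integral \<Omega> (\<lambda>t. \<omega> t * E c t) = integral \<Omega> (\<lambda>t. \<Sum>i<K. c i * (\<omega> t * \<phi> i t))"
      unfolding E_def by (simp add: sum_distrib_left algebra_simps)
    also have "\<dots> = (\<Sum>i<K. integral \<Omega> (\<lambda>t. c i * (\<omega> t * \<phi> i t)))"
    proof (intro integral_sum)
      fix i assume "i \<in> {..<K}"
      then have "(\<lambda>t. \<omega> t * \<phi> i t) integrable_on \<Omega>"
        using pai set_lebesgue_integral_eq_integral(1) by blast
      then show "(\<lambda>t. c i * (\<omega> t * \<phi> i t)) integrable_on \<Omega>" by (rule integrable_on_mult_right)
    qed simp
    also have "\<dots> = (\<Sum>i<K. c i * m i)" unfolding m_def by simp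
    finally show ?thesis by simp
  qed
  have spike: "integral \<Omega> h = integral U h" for h :: "'a \<Rightarrow> real"
    by (rule integral_spike_set) (use negOU UO in \<open>auto intro: negligible_subset\<close>)

  define Xs where "Xs N = x ` {n\<in>{1..N}. x n \<in> U}" for N
  have Xfin: "\<forall>N. finite (Xs N)" unfolding Xs_def by simp
  have Xsub: "\<forall>N. Xs N \<subseteq> U" unfolding Xs_def by auto
  have Xmon: "\<forall>N N'. N \<le> N' \<longrightarrow> Xs N \<subseteq> Xs N'" unfolding Xs_def by auto
  have Xx: "Xs N \<subseteq> x ` {1..N}" for N unfolding Xs_def by auto
  have dense: "\<exists>n\<ge>1. x n \<in> ball t r" if t: "t \<in> U" and r: "r > 0" and tr: "ball t r \<subseteq> U" for t r
  proof (rule ccontr)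
    assume nx: "\<not> (\<exists>n\<ge>1. x n \<in> ball t r)"
    define g where "g s = max 0 (r - dist s t)" for s
    have gc: "continuous_on UNIV g" unfolding g_def by (intro continuous_intros)
    have gnn: "g s \<ge> 0" for s unfolding g_def by simp
    have gle: "g s \<le> r" for s unfolding g_def using r by simp
    have gnorm: "norm (g s) \<le> r" for s using gnn gle by simp
    have gb: "bounded (g ` \<Omega>)"
      unfolding bounded_iff using gnorm by blast
    have gm: "g \<in> borel_measurable (lebesgue_on \<Omega>)"
      by (rule continuous_imp_measurable_on_sets_lebesgue[OF continuous_on_subset[OF gc] Oleb]) simp
    have "continuous (at s within \<Omega>) g" for s
    proof -
      have "isCont g s" using gc by (simp add: continuous_on_eq_continuous_at)
      then show ?thesis by (rule continuous_at_imp_continuous_at_within)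
    qed
    then have gae: "AE s in lebesgue. s \<in> \<Omega> \<longrightarrow> continuous (at s within \<Omega>) g"
      by (intro AE_I2) blast
    have lim: "(\<lambda>N. measure lebesgue \<Omega> / real N * (\<Sum>n=1..N. g (x n))) \<longlonglongrightarrow> integral \<Omega> g"
      by (rule equi[OF gb gm gae])
    have g0: "g (x n) = 0" if "n \<ge> 1" for n
    proof -
      have "x n \<notin> ball t r" using nx that by blast
      then have "\<not> dist t (x n) < r" by simp
      then have "r - dist (x n) t \<le> 0" by (simp add: dist_commute)
      then show "g (x n) = 0" unfolding g_def by (simp add: max_def)
    qed
    have "(\<Sum>n=1..N. g (x n)) = 0" for N
      by (rule sum.neutral) (use g0 in auto)
    then have eq0: "(\<lambda>N. measure lebesgue \<Omega> / real N * (\<Sum>n=1..N. g (x n))) = (\<lambda>N. 0)" by (intro ext) simp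
    have "(\<lambda>N. (0::real)) \<longlonglongrightarrow> integral \<Omega> g" using lim unfolding eq0 .
    then have "0 = integral \<Omega> g" by (rule LIMSEQ_unique[OF tendsto_const])
    then have ig0: "integral \<Omega> g = 0" by simp
    have "integral \<Omega> g > 0"
    proof (rule integral_pos_ball)
      show "g absolutely_integrable_on \<Omega>"
        by (rule measurable_bounded_by_integrable_imp_absolutely_integrable[OF gm Oleb integrable_on_const[OF Olm, of r]])
          (rule gnorm)
      show "\<forall>s\<in>\<Omega>. g s \<ge> 0" using gnn by blast
      show "ball t r \<subseteq> \<Omega>" using tr UO by blast
      show "r > 0" by (rule r)
      show "\<forall>s\<in>ball t r. g s > 0"
      proof
        fix s assume "s \<in> ball t r"
        then have "dist s t < r" by (simp add: dist_commute)
        then show "g s > 0" unfolding g_def by simp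
      qed
    qed
    then show False using ig0 by simp
  qed
  have Q: "\<forall>c. (\<forall>t\<in>U. (\<Sum>i\<in>{..<K}. c i * \<phi> i t) = 0) \<longrightarrow> (\<Sum>i\<in>{..<K}. c i * m i) = 0"
  proof (intro allI impI)
    fix c assume z: "\<forall>t\<in>U. (\<Sum>i\<in>{..<K}. c i * \<phi> i t) = 0"
    have "(\<Sum>i\<in>{..<K}. c i * m i) = integral U (\<lambda>t. \<omega> t * E c t)" using lin spike by simp
    also have "\<dots> = integral U (\<lambda>t. 0)" using z unfolding E_def by (intro integral_cong) auto
    finally show "(\<Sum>i\<in>{..<K}. c i * m i) = 0" by simp
  qed
  have P: "\<forall>c. (\<forall>N. \<forall>t\<in>Xs N. (\<Sum>i\<in>{..<K}. c i * \<phi> i t) \<ge> 0) \<and> (\<Sum>i\<in>{..<K}. c i * m i) \<le> 0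
       \<longrightarrow> (\<forall>t\<in>U. (\<Sum>i\<in>{..<K}. c i * \<phi> i t) = 0)"
  proof (intro allI impI)
    fix c assume H: "(\<forall>N. \<forall>t\<in>Xs N. (\<Sum>i\<in>{..<K}. c i * \<phi> i t) \<ge> 0) \<and> (\<Sum>i\<in>{..<K}. c i * m i) \<le> 0"
    have Hx: "\<forall>N. \<forall>t\<in>Xs N. E c t \<ge> 0" using H unfolding E_def by simp
    have Hm: "(\<Sum>i<K. c i * m i) \<le> 0" using H by simp
    have Ecc: "isCont (E c) t" if "t \<in> U" for t
      using continuous_on_interior[OF Ecn] that unfolding U_def by simp
    have step1: "\<forall>t\<in>U. E c t \<ge> 0"
    proof (rule ccontr)
      assume "\<not> (\<forall>t\<in>U. E c t \<ge> 0)"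
      then obtain t where t: "t \<in> U" "E c t < 0" by (auto simp: not_le)
      from nbhd_neg[OF Ecc[OF t(1)] t(2) Uopen t(1)]
      obtain r where r: "r > 0" "ball t r \<subseteq> U" "\<forall>s\<in>ball t r. E c s < 0" by blast
      from dense[OF t(1) r(1) r(2)] obtain n where n: "n \<ge> 1" "x n \<in> ball t r" by blast
      have "x n \<in> Xs n" unfolding Xs_def using n r(2) by auto
      then have "E c (x n) \<ge> 0" using Hx by blast
      moreover have "E c (x n) < 0" using r(3) n(2) by blast
      ultimately show False by simp
    qed
    show "\<forall>t\<in>U. (\<Sum>i\<in>{..<K}. c i * \<phi> i t) = 0"
    proof (rule ccontr)
      assume "\<not> (\<forall>t\<in>U. (\<Sum>i\<in>{..<K}. c i * \<phi> i t) = 0)"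
      then obtain t where t: "t \<in> U" "E c t \<noteq> 0" unfolding E_def by auto
      moreover have "E c t \<ge> 0" using step1 t(1) by blast
      ultimately have tpos: "- E c t < 0" by simp
      have "isCont (\<lambda>s. - E c s) t" using Ecc[OF t(1)] by (rule continuous_minus)
      from nbhd_neg[OF this tpos Uopen t(1)]
      obtain r where r0: "r > 0" "ball t r \<subseteq> U" "\<forall>s\<in>ball t r. - E c s < 0" by blast
      have r: "r > 0" "ball t r \<subseteq> U" "\<forall>s\<in>ball t r. E c s > 0" using r0 by auto
      define Z where "Z = {s\<in>\<Omega>. \<omega> s = 0}"
      have "\<not> ball t r \<subseteq> closure Z"
      proof
        assume "ball t r \<subseteq> closure Z"
        then have "ball t r \<subseteq> interior (closure Z)" by (simp add: interior_maximal)
        then show False using nwd r(1) unfolding Z_def by auto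
      qed
      then obtain s where s: "s \<in> ball t r" "s \<notin> closure Z" by blast
      have "open (ball t r - closure Z)" by (simp add: open_Diff)
      then obtain r2 where r2: "r2 > 0" "ball s r2 \<subseteq> ball t r - closure Z"
        using s openE by blast
      define h where "h s = \<omega> s * E c s" for s
      have "integral U h > 0"
      proof (rule integral_pos_ball)
        show "h absolutely_integrable_on U"
          unfolding h_def by (rule set_integrable_subset[OF hai Uleb UO])
        show "\<forall>s\<in>U. h s \<ge> 0" unfolding h_def using step1 wnn UO by auto
        show "ball s r2 \<subseteq> U" using r2 r by blast
        show "r2 > 0" by (rule r2)
        show "\<forall>s'\<in>ball s r2. h s' > 0"
        proof
          fix s' assume s': "s' \<in> ball s r2"
          then have s'1: "s' \<in> ball t r" "s' \<notin> closure Z" using r2 by auto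
          then have s'O: "s' \<in> \<Omega>" using r UO by blast
          have "s' \<notin> Z" using s'1 closure_subset by blast
          then have "\<omega> s' \<noteq> 0" using s'O unfolding Z_def by blast
          moreover have "\<omega> s' \<ge> 0" using wnn s'O by blast
          ultimately have "\<omega> s' > 0" by simp
          moreover have "E c s' > 0" using r(3) s'1 by blast
          ultimately show "h s' > 0" unfolding h_def by simp
        qed
      qed
      then have "(\<Sum>i<K. c i * m i) > 0" using lin spike unfolding h_def by simp
      then show False using Hm by simp
    qed
  qed
  have finK: "finite {..<K}" by simp
  from mp[OF mp[OF core[OF Xfin Xsub Xmon finK, of \<phi> m] P] Q]
  obtain N l where lnn: "\<forall>t\<in>Xs N. l t \<ge> 0" and rep: "\<forall>i\<in>{..<K}. m i = (\<Sum>t\<in>Xs N. l t * \<phi> i t)"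
    by blast
  define S0 where "S0 = {t\<in>Xs N. l t > 0}"
  have S0fin: "finite S0" using Xfin unfolding S0_def by simp
  have rep0: "\<forall>i\<in>{..<K}. m i = (\<Sum>t\<in>S0. l t * \<phi> i t)"
  proof
    fix i assume "i \<in> {..<K}"
    have "(\<Sum>t\<in>S0. l t * \<phi> i t) = (\<Sum>t\<in>Xs N. l t * \<phi> i t)"
      unfolding S0_def
    proof (rule sum.mono_neutral_left)
      show "finite (Xs N)" using Xfin by blast
      show "{t \<in> Xs N. 0 < l t} \<subseteq> Xs N" by blast
      show "\<forall>ia\<in>Xs N - {t \<in> Xs N. 0 < l t}. l ia * \<phi> i ia = 0"
      proof
        fix ia assume ia: "ia \<in> Xs N - {t \<in> Xs N. 0 < l t}"
        then have "l ia \<ge> 0" "\<not> l ia > 0" using lnn by auto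
        then have "l ia = 0" by linarith
        then show "l ia * \<phi> i ia = 0" by simp
      qed
    qed
    then show "m i = (\<Sum>t\<in>S0. l t * \<phi> i t)" using rep \<open>i \<in> {..<K}\<close> by simp
  qed
  from carath_aux[of "{..<K}" "card S0" m "\<lambda>t i. \<phi> i t", rule_format, where S=S0 and l=l] S0fin rep0
  obtain S' l' where S': "S' \<subseteq> S0" "card S' \<le> K" "\<forall>t\<in>S'. l' t > 0"
    and rep': "\<forall>i\<in>{..<K}. m i = (\<Sum>t\<in>S'. l' t * \<phi> i t)"
    unfolding S0_def by auto
  have S'fin: "finite S'" using S0fin S'(1) finite_subset by blast
  obtain hb where hb: "bij_betw hb {0..<card S'} S'" using ex_bij_betw_nat_finite[OF S'fin] by blast
  define M where "M = card S'"
  have hbM: "bij_betw hb {..<M} S'" using hb unfolding M_def by (simp add: atLeast0LessThan)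
  have S'O: "S' \<subseteq> \<Omega>" using S'(1) Xsub UO unfolding S0_def by blast
  show ?thesis
  proof (intro exI conjI)
    show "M \<le> K" using S'(2) unfolding M_def .
    show "\<forall>j<M. hb j \<in> x ` {1..N}"
      using hbM S'(1) Xx unfolding S0_def bij_betw_def by blast
    show "\<forall>j<M. l' (hb j) > 0" using hbM S'(3) unfolding bij_betw_def by blast
    show "\<forall>f\<in>F. (\<Sum>j<M. l' (hb j) * f (hb j)) = integral \<Omega> (\<lambda>t. \<omega> t * f t)"
    proof
      fix f assume "f \<in> F"
      then obtain c where c: "\<forall>x\<in>\<Omega>. f x = (\<Sum>i<K. c i * \<phi> i x)" unfolding Fdef by blast
      have "(\<Sum>j<M. l' (hb j) * f (hb j)) = (\<Sum>t\<in>S'. l' t * f t)"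
        by (rule sum.reindex_bij_betw[OF hbM])
      also have "\<dots> = (\<Sum>t\<in>S'. l' t * (\<Sum>i<K. c i * \<phi> i t))"
        using c S'O by (intro sum.cong) auto
      also have "\<dots> = (\<Sum>i<K. c i * (\<Sum>t\<in>S'. l' t * \<phi> i t))"
        by (simp add: sum_distrib_left algebra_simps sum.swap[of _ S'])
      also have "\<dots> = (\<Sum>i<K. c i * m i)" using rep' by simp
      also have "\<dots> = integral \<Omega> (\<lambda>t. \<omega> t * E c t)" by (rule lin)
      also have "\<dots> = integral \<Omega> (\<lambda>t. \<omega> t * f t)"
        using c unfolding E_def by (intro integral_cong) auto
      finally show "(\<Sum>j<M. l' (hb j) * f (hb j)) = integral \<Omega> (\<lambda>t. \<omega> t * f t)" .
    qed
  qed
qed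

end
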